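(* Let $f:\mathbb{R}^n\to\mathbb{R}$ be differentiable and strongly convex, and let $x^0\in\mathbb{R}^n$. For every $\eta>0$ there exists $\tau>0$ such that for every $x\in\mathbb{R}^n$ with $f(x)\le f(x^0)$ and $\|\nabla f(x)\|\ge\eta$ we have $$f(x-t\nabla f(x))\le f(x)-\frac{\eta^2}{2}t\quad\text{for all }t\in[0,\tau].$$
   Context: $\|\cdot\|$ is the Euclidean norm. $f$ is strongly convex with constant $\mu>0$ if $f(tx+(1-t)y)\le tf(x)+(1-t)f(y)-\frac{\mu t(1-t)}{2}\|y-x\|^2$ for all $x,y$ and $t\in[0,1]$. *)

theory Defs
  imports "HOL-Analysis.Analysis"
begin

definition strongly_convex :: "('a::real_normed_vector \<Rightarrow> real) \<Rightarrow> real \<Rightarrow> bool" where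
  "strongly_convex f \<mu> \<longleftrightarrow> \<mu> > 0 \<and>
     (\<forall>x y t. 0 \<le> t \<and> t \<le> 1 \<longrightarrow>
        f (t *\<^sub>R x + (1 - t) *\<^sub>R y)
          \<le> t * f x + (1 - t) * f y - \<mu> * t * (1 - t) / 2 * (norm (y - x))\<^sup>2)"

definition gradient :: "('a::euclidean_space \<Rightarrow> real) \<Rightarrow> 'a \<Rightarrow> 'a" where
  "gradient f x = (THE g. (f has_derivative (\<lambda>h. g \<bullet> h)) (at x))"

end

theory Submission
  imports Defs
begin

lemma grad_has_deriv:
  fixes f :: "'a::euclidean_space \<Rightarrow> real"
  assumes "f differentiable (at x)"
  shows "(f has_derivative (\<lambda>h. gradient f x \<bullet> h)) (at x)"
proof -
  obtain D where D: "(f has_derivative D) (at x)" using assms unfolding differentiable_def by blast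
  have lin: "linear D" using has_derivative_linear[OF D] .
  define g where "g = (\<Sum>b\<in>Basis. D b *\<^sub>R b)"
  have eq: "D h = g \<bullet> h" for h
  proof -
    have "D h = D (\<Sum>b\<in>Basis. (h \<bullet> b) *\<^sub>R b)" by (simp add: euclidean_representation)
    also have "\<dots> = (\<Sum>b\<in>Basis. (h \<bullet> b) * D b)"
      by (simp add: linear_sum[OF lin] linear_scale[OF lin])
    also have "\<dots> = g \<bullet> h" unfolding g_def by (simp add: inner_sum_right inner_commute mult.commute)
    finally show ?thesis .
  qed
  have Dg: "(f has_derivative (\<lambda>h. g \<bullet> h)) (at x)"
    using D eq by (metis (no_types) ext)
  have uniq: "g' = g" if "(f has_derivative (\<lambda>h. g' \<bullet> h)) (at x)" for g'
  proof -
    have "(\<lambda>h. g' \<bullet> h) = (\<lambda>h. g \<bullet> h)" using has_derivative_unique[OF that Dg] .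
    then have "\<And>h. g' \<bullet> h = g \<bullet> h" by metis
    then show ?thesis by (metis euclidean_eqI)
  qed
  have "gradient f x = g" unfolding gradient_def
    using Dg uniq by (rule the_equality)
  then show ?thesis using Dg by simp
qed

lemma sc_convex:
  fixes f :: "'a::euclidean_space \<Rightarrow> real"
  assumes "strongly_convex f \<mu>" and that: "0 \<le> t" "t \<le> 1"
  shows "f (t *\<^sub>R x + (1 - t) *\<^sub>R y) \<le> t * f x + (1 - t) * f y"
proof -
  have "\<mu> > 0" using assms unfolding strongly_convex_def by blast
  moreover have "f (t *\<^sub>R x + (1 - t) *\<^sub>R y)
          \<le> t * f x + (1 - t) * f y - \<mu> * t * (1 - t) / 2 * (norm (y - x))\<^sup>2"
    using assms that unfolding strongly_convex_def by blast
  moreover have "\<mu> * t * (1 - t) / 2 * (norm (y - x))\<^sup>2 \<ge> 0" using that calculation(1) by simp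
  ultimately show ?thesis by linarith
qed

lemma grad_ineq:
  fixes f :: "'a::euclidean_space \<Rightarrow> real"
  assumes diff: "\<And>x. f differentiable (at x)" and sc: "strongly_convex f \<mu>"
  shows "f z \<ge> f y + gradient f y \<bullet> (z - y)"
proof -
  define \<phi> where "\<phi> = (\<lambda>s::real. f (y + s *\<^sub>R (z - y)))"
  have cv: "convex_on UNIV \<phi>"
  proof (rule convex_onI)
    fix t a b :: real assume t: "0 < t" "t < 1"
    have "(1 - t) *\<^sub>R a + t *\<^sub>R b = t *\<^sub>R b + (1 - t) *\<^sub>R a" by simp
    have "y + ((1 - t) *\<^sub>R a + t *\<^sub>R b) *\<^sub>R (z - y)
        = t *\<^sub>R (y + b *\<^sub>R (z - y)) + (1 - t) *\<^sub>R (y + a *\<^sub>R (z - y))"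
      by (simp add: algebra_simps)
    then have "\<phi> ((1 - t) *\<^sub>R a + t *\<^sub>R b) = f (t *\<^sub>R (y + b *\<^sub>R (z - y)) + (1 - t) *\<^sub>R (y + a *\<^sub>R (z - y)))"
      unfolding \<phi>_def by simp
    also have "\<dots> \<le> t * \<phi> b + (1 - t) * \<phi> a" unfolding \<phi>_def
      using sc_convex[OF sc] t by simp
    finally show "\<phi> ((1 - t) *\<^sub>R a + t *\<^sub>R b) \<le> (1 - t) * \<phi> a + t * \<phi> b" by simp
  qed simp
  have d: "((\<lambda>s. y + s *\<^sub>R (z - y)) has_derivative (\<lambda>h. h *\<^sub>R (z - y))) (at 0)"
    by (auto intro!: derivative_eq_intros)
  have "(\<phi> has_derivative (\<lambda>h. gradient f y \<bullet> (h *\<^sub>R (z - y)))) (at 0)"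
  proof -
    have gy: "(f has_derivative (\<lambda>h. gradient f y \<bullet> h)) (at ((\<lambda>s. y + s *\<^sub>R (z - y)) 0))"
      using grad_has_deriv[OF diff, of y] by simp
    show ?thesis unfolding \<phi>_def using has_derivative_compose[OF d gy] by simp
  qed
  moreover have "(\<lambda>h. gradient f y \<bullet> (h *\<^sub>R (z - y))) = (\<lambda>h. (gradient f y \<bullet> (z - y)) * h)"
    by (simp add: mult.commute)
  ultimately have "(\<phi> has_field_derivative (gradient f y \<bullet> (z - y))) (at 0)"
    by (simp add: has_field_derivative_def)
  then have "\<phi> 1 - \<phi> 0 \<ge> (gradient f y \<bullet> (z - y)) * (1 - 0)"
    by (intro convex_on_imp_above_tangent[OF cv]) auto
  then show ?thesis unfolding \<phi>_def by simp
qed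

lemma f_cont:
  fixes f :: "'a::euclidean_space \<Rightarrow> real"
  assumes diff: "\<And>x. f differentiable (at x)"
  shows "continuous_on S f"
  by (metis continuous_at_imp_continuous_on differentiable_imp_continuous_within diff)

lemma grad_cont:
  fixes f :: "'a::euclidean_space \<Rightarrow> real"
  assumes diff: "\<And>x. f differentiable (at x)" and sc: "strongly_convex f \<mu>"
  shows "continuous_on UNIV (gradient f)"
  unfolding continuous_on_iff
proof (intro ballI allI impI)
  fix x :: 'a and \<epsilon> :: real assume e: "\<epsilon> > 0"
  define g where "g = gradient f x"
  have "(f has_derivative (\<lambda>h. g \<bullet> h)) (at x)" unfolding g_def using grad_has_deriv[OF diff] .
  then obtain d where d: "d > 0" and dd: "\<And>y. norm (y - x) < d \<Longrightarrow>
      norm (f y - f x - g \<bullet> (y - x)) \<le> \<epsilon> / 4 * norm (y - x)"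
    unfolding has_derivative_at_alt using e by (metis divide_pos_pos zero_less_numeral)
  define r where "r = d / 2"
  have r: "r > 0" "r < d" using d unfolding r_def by auto
  have "uniformly_continuous_on (cball x (r + 1)) f"
    by (rule compact_uniformly_continuous[OF f_cont[OF diff] compact_cball])
  moreover have er: "\<epsilon> * r / 4 > 0" using e r by simp
  ultimately obtain \<delta>1 where d1: "\<delta>1 > 0" and dd1: "\<And>a b. a \<in> cball x (r + 1) \<Longrightarrow>
      b \<in> cball x (r + 1) \<Longrightarrow> dist b a < \<delta>1 \<Longrightarrow> dist (f b) (f a) < \<epsilon> * r / 4"
    by (metis uniformly_continuous_onE)
  show "\<exists>\<delta>>0. \<forall>y\<in>UNIV. dist y x < \<delta> \<longrightarrow> dist (gradient f y) (gradient f x) < \<epsilon>"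
  proof (intro exI[of _ "min \<delta>1 1"] conjI ballI impI)
    show "min \<delta>1 1 > 0" using d1 by simp
    fix y assume "dist y x < min \<delta>1 1"
    then have yx: "dist y x < \<delta>1" "dist y x < 1" by auto
    define w where "w = gradient f y - g"
    show "dist (gradient f y) (gradient f x) < \<epsilon>"
    proof (cases "w = 0")
      case True then show ?thesis using e unfolding w_def g_def by simp
    next
      case False
      define u where "u = w /\<^sub>R norm w"
      have nu: "norm u = 1" using False unfolding u_def by simp
      have wu: "w \<bullet> u = norm w" using False unfolding u_def
        by (simp add: power2_norm_eq_inner[symmetric] power2_eq_square)
      have h1: "f (y + r *\<^sub>R u) \<ge> f y + r * (gradient f y \<bullet> u)"
        using grad_ineq[OF diff sc, of y "y + r *\<^sub>R u"] by simp
      have nru: "norm (r *\<^sub>R u) = r" using nu r by simp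
      have "norm (f (x + r *\<^sub>R u) - f x - g \<bullet> (r *\<^sub>R u)) \<le> \<epsilon> / 4 * r"
        using dd[of "x + r *\<^sub>R u"] nru r by simp
      then have h2: "f (x + r *\<^sub>R u) - f x \<le> r * (g \<bullet> u) + \<epsilon> / 4 * r"
        using abs_ge_self[of "f (x + r *\<^sub>R u) - f x - g \<bullet> (r *\<^sub>R u)"] by simp
      have in1: "x + r *\<^sub>R u \<in> cball x (r + 1)" using nru by (simp add: dist_norm)
      have in2: "y + r *\<^sub>R u \<in> cball x (r + 1)"
      proof -
        have "dist x (y + r *\<^sub>R u) \<le> dist x y + dist y (y + r *\<^sub>R u)" by (rule dist_triangle)
        also have "dist y (y + r *\<^sub>R u) = r" using nru by (simp add: dist_norm)
        finally show ?thesis using yx by (simp add: dist_commute)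
      qed
      have in3: "y \<in> cball x (r + 1)" "x \<in> cball x (r + 1)" using yx r by (auto simp: dist_commute)
      have h3: "dist (f (y + r *\<^sub>R u)) (f (x + r *\<^sub>R u)) < \<epsilon> * r / 4"
        using dd1[OF in1 in2] yx by (simp add: dist_norm)
      have h4: "dist (f y) (f x) < \<epsilon> * r / 4"
        using dd1[OF in3(2) in3(1)] yx by simp
      have "r * (gradient f y \<bullet> u) < r * (g \<bullet> u) + \<epsilon> * r"
        using h1 h2 h3[unfolded dist_real_def abs_less_iff] h4[unfolded dist_real_def abs_less_iff] er by (simp add: field_simps)
      then have "r * (w \<bullet> u) < r * \<epsilon>" unfolding w_def by (simp add: inner_diff_left algebra_simps)
      then have "w \<bullet> u < \<epsilon>" using r by simp
      then show ?thesis using wu unfolding w_def g_def by (simp add: dist_norm)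
    qed
  qed
qed

lemma sublevel_bounded:
  fixes f :: "'a::euclidean_space \<Rightarrow> real"
  assumes diff: "\<And>x. f differentiable (at x)" and sc: "strongly_convex f \<mu>"
    and fx: "f x \<le> f x0"
  shows "norm (x - x0) \<le> 4 * norm (gradient f x0) / \<mu>"
proof -
  have mu: "\<mu> > 0" using sc unfolding strongly_convex_def by blast
  define m where "m = (1/2) *\<^sub>R x + (1 - 1/2) *\<^sub>R x0"
  define r where "r = norm (x - x0)"
  define G where "G = norm (gradient f x0)"
  have h1: "f m \<le> 1/2 * f x + (1 - 1/2) * f x0 - \<mu> * (1/2) * (1 - 1/2) / 2 * (norm (x0 - x))\<^sup>2"
  proof -
    have "\<forall>x y t. 0 \<le> t \<and> t \<le> 1 \<longrightarrow>
        f (t *\<^sub>R x + (1 - t) *\<^sub>R y)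
          \<le> t * f x + (1 - t) * f y - \<mu> * t * (1 - t) / 2 * (norm (y - x))\<^sup>2"
      using sc unfolding strongly_convex_def by blast
    from this[rule_format, of "1/2" x x0] show ?thesis unfolding m_def by simp
  qed
  have rr: "norm (x0 - x) = r" unfolding r_def by (simp add: norm_minus_commute)
  have h1': "f m \<le> f x0 - \<mu> / 8 * r\<^sup>2" using h1 fx rr by simp
  have h2: "f m \<ge> f x0 + gradient f x0 \<bullet> (m - x0)" using grad_ineq[OF diff sc] by blast
  have "m - x0 = (1/2) *\<^sub>R (x - x0)" unfolding m_def by (simp add: algebra_simps flip: scaleR_add_left)
  then have "gradient f x0 \<bullet> (m - x0) = 1/2 * (gradient f x0 \<bullet> (x - x0))" by simp
  moreover have "gradient f x0 \<bullet> (x - x0) \<ge> - (G * r)"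
    using norm_cauchy_schwarz[of "gradient f x0" "x0 - x"] unfolding G_def r_def
    by (simp add: inner_diff_right norm_minus_commute)
  ultimately have "\<mu> / 8 * r\<^sup>2 \<le> G * r / 2" using h1' h2 by simp
  then have "r * (\<mu> * r) \<le> r * (4 * G)" by (simp add: power2_eq_square algebra_simps)
  moreover have "r \<ge> 0" unfolding r_def by simp
  ultimately have "\<mu> * r \<le> 4 * G \<or> r = 0" by (metis mult_le_cancel_left_pos less_eq_real_def)
  then have "\<mu> * r \<le> 4 * G" using G_def by auto
  then show ?thesis unfolding r_def G_def using mu by (simp add: pos_le_divide_eq mult.commute)
qed

theorem proposition5:
  fixes f :: "real ^ 'n \<Rightarrow> real" and x0 :: "real ^ 'n" and \<mu> :: real
  assumes diff: "\<And>x. f differentiable (at x)"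
    and sc: "strongly_convex f \<mu>"
  shows "\<forall>\<eta>>0. \<exists>\<tau>>0. \<forall>x. f x \<le> f x0 \<and> norm (gradient f x) \<ge> \<eta> \<longrightarrow>
           (\<forall>t\<in>{0..\<tau>}. f (x - t *\<^sub>R gradient f x) \<le> f x - \<eta>\<^sup>2 / 2 * t)"
proof (intro allI impI)
  fix \<eta> :: real assume eta: "\<eta> > 0"
  define R where "R = 4 * norm (gradient f x0) / \<mu>"
  define K where "K = cball x0 (R + 1)"
  have "uniformly_continuous_on K (gradient f)" unfolding K_def
    by (rule compact_uniformly_continuous[OF continuous_on_subset[OF grad_cont[OF diff sc] subset_UNIV] compact_cball])
  then obtain \<delta> where dpos: "\<delta> > 0" and dd: "\<And>a b. a \<in> K \<Longrightarrow> b \<in> K \<Longrightarrow> dist b a < \<delta> \<Longrightarrow>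
      dist (gradient f b) (gradient f a) < \<eta> / 2"
    using eta by (metis uniformly_continuous_onE half_gt_zero)
  have "compact (gradient f ` K)" unfolding K_def
    by (rule compact_continuous_image[OF continuous_on_subset[OF grad_cont[OF diff sc] subset_UNIV] compact_cball])
  then obtain G where Gpos: "G > 0" and GG: "\<And>y. y \<in> K \<Longrightarrow> norm (gradient f y) \<le> G"
    using compact_imp_bounded bounded_pos by (metis imageI)
  define \<tau> where "\<tau> = min 1 \<delta> / (2 * G)"
  show "\<exists>\<tau>>0. \<forall>x. f x \<le> f x0 \<and> norm (gradient f x) \<ge> \<eta> \<longrightarrow>
           (\<forall>t\<in>{0..\<tau>}. f (x - t *\<^sub>R gradient f x) \<le> f x - \<eta>\<^sup>2 / 2 * t)"
  proof (intro exI[of _ \<tau>] conjI allI impI ballI)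
    show "\<tau> > 0" unfolding \<tau>_def using dpos Gpos by simp
    fix x t assume asm: "f x \<le> f x0 \<and> \<eta> \<le> norm (gradient f x)" and t: "t \<in> {0..\<tau>}"
    define g where "g = gradient f x"
    have xR: "norm (x - x0) \<le> R" unfolding R_def using sublevel_bounded[OF diff sc] asm by blast
    then have xK: "x \<in> K" unfolding K_def by (simp add: dist_norm norm_minus_commute)
    have ng: "norm g \<le> G" unfolding g_def using GG[OF xK] .
    have t0: "t \<ge> 0" "t \<le> \<tau>" using t by auto
    have "t * norm g \<le> \<tau> * G" using t0 ng Gpos by (intro mult_mono) auto
    also have "\<tau> * G = min 1 \<delta> / 2" unfolding \<tau>_def using Gpos by simp
    finally have tg: "t * norm g \<le> min 1 \<delta> / 2" .
    define y where "y = x - t *\<^sub>R g"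
    have nyx: "norm (y - x) = t * norm g" unfolding y_def using t0 by simp
    have yK: "y \<in> K"
    proof -
      have "dist x0 y \<le> dist x0 x + dist x y" by (rule dist_triangle)
      also have "dist x y = t * norm g" using nyx by (simp add: dist_norm norm_minus_commute)
      finally have "dist x0 y \<le> norm (x - x0) + t * norm g" by (simp add: dist_norm norm_minus_commute)
      then show ?thesis unfolding K_def using xR tg by simp
    qed
    have "dist y x < \<delta>" using nyx tg dpos by (simp add: dist_norm)
    then have close: "norm (gradient f y - g) < \<eta> / 2" using dd[OF xK yK] unfolding g_def by (simp add: dist_norm)
    have eg: "\<eta> \<le> norm g" using asm unfolding g_def by simp
    have "gradient f y \<bullet> g = g \<bullet> g + (gradient f y - g) \<bullet> g" by (simp add: inner_diff_left)
    moreover have "(gradient f y - g) \<bullet> g \<ge> - (norm (gradient f y - g) * norm g)"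
      using norm_cauchy_schwarz[of "g - gradient f y" g] by (simp add: norm_minus_commute inner_diff_left)
    moreover have "norm (gradient f y - g) * norm g \<le> \<eta> / 2 * norm g"
      using close by (intro mult_right_mono) auto
    moreover have "\<eta> / 2 * norm g \<le> norm g * norm g / 2" using eg by (simp add: mult_right_mono)
    moreover have "\<eta> * \<eta> \<le> norm g * norm g" using eg eta by (intro mult_mono) auto
    moreover have "g \<bullet> g = norm g * norm g" by (simp add: power2_norm_eq_inner[symmetric] power2_eq_square)
    ultimately have ip: "gradient f y \<bullet> g \<ge> \<eta>\<^sup>2 / 2" by (simp add: power2_eq_square)
    have "f x \<ge> f y + gradient f y \<bullet> (x - y)" using grad_ineq[OF diff sc] by blast
    moreover have "x - y = t *\<^sub>R g" unfolding y_def by simp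
    ultimately have "f y \<le> f x - t * (gradient f y \<bullet> g)" by simp
    moreover have "t * (\<eta>\<^sup>2 / 2) \<le> t * (gradient f y \<bullet> g)" using ip t0 by (intro mult_left_mono) auto
    ultimately show "f (x - t *\<^sub>R gradient f x) \<le> f x - \<eta>\<^sup>2 / 2 * t"
      unfolding y_def g_def by (simp add: mult.commute)
  qed
qed

end
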